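(* Given any fixed graph $G$ (possibly disconnected) and any $\varepsilon > 0$, there is a constant $C = C(G, \varepsilon) > 0$ and a strategy for the USTSR process on $n$ vertices that constructs $(1-\varepsilon) \tfrac{n}{|G|}$ vertex-disjoint copies of $G$ within at most $C n$ rounds with high probability.
   Context: The USTSR process on $n$ vertices: starting from the empty graph on $V_n=\{v_1,\dots,v_n\}$, at each round $i\ge1$ a spanning tree $T_i$ of $K_n$ is sampled uniformly at random, independently of previous rounds, and Builder adds one edge of $T_i$ of his choice (chosen according to a strategy, i.e. a rule selecting an edge of the current tree given the current graph). $|G|$ is the number of vertices of $G$. "With high probability" means with probability tending to $1$ as $n\to\infty$. *)

theory Defs
  imports "HOL-Probability.Probability"
begin

definition complete_edges :: "nat \<Rightarrow> nat set set" where
  "complete_edges n = {{u, v} | u v. u < n \<and> v < n \<and> u \<noteq> v}"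

definition edge_rel :: "'a set set \<Rightarrow> ('a \<times> 'a) set" where
  "edge_rel E = {(x, y). {x, y} \<in> E}"

definition spanning_tree :: "nat \<Rightarrow> nat set set \<Rightarrow> bool" where
  "spanning_tree n T \<longleftrightarrow>
     T \<subseteq> complete_edges n \<and>
     (\<forall>u<n. \<forall>v<n. (u, v) \<in> (edge_rel T)\<^sup>*) \<and>
     (\<forall>e\<in>T. \<forall>u v. e = {u, v} \<longrightarrow> (u, v) \<notin> (edge_rel (T - {e}))\<^sup>*)"

definition spanning_trees :: "nat \<Rightarrow> nat set set set" where
  "spanning_trees n = {T. spanning_tree n T}"

primrec ustsr_graph :: "nat \<Rightarrow> (nat set set \<Rightarrow> nat set set \<Rightarrow> nat set) \<Rightarrow> nat \<Rightarrow> nat set set pmf" where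
  "ustsr_graph n S 0 = return_pmf {}"
| "ustsr_graph n S (Suc k) =
     bind_pmf (ustsr_graph n S k)
       (\<lambda>H. map_pmf (\<lambda>T. insert (S H T) H) (pmf_of_set (spanning_trees n)))"

definition has_disjoint_copies ::
  "'a set \<Rightarrow> 'a set set \<Rightarrow> nat \<Rightarrow> nat set set \<Rightarrow> nat \<Rightarrow> bool" where
  "has_disjoint_copies VG EG n H m \<longleftrightarrow>
     (\<exists>f :: nat \<Rightarrow> 'a \<Rightarrow> nat.
        (\<forall>i<m. inj_on (f i) VG \<and> f i ` VG \<subseteq> {..<n} \<and> (\<forall>e\<in>EG. f i ` e \<in> H)) \<and>
        (\<forall>i<m. \<forall>j<m. i \<noteq> j \<longrightarrow> f i ` VG \<inter> f j ` VG = {}))"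

end

theory Submission
  imports Defs
begin

definition mapT :: "(nat \<Rightarrow> nat) \<Rightarrow> nat set set \<Rightarrow> nat set set" where
  "mapT \<sigma> T = (\<lambda>e. \<sigma> ` e) ` T"

definition perm_n :: "nat \<Rightarrow> (nat \<Rightarrow> nat) \<Rightarrow> bool" where
  "perm_n n \<sigma> \<longleftrightarrow> bij \<sigma> \<and> (\<forall>x. \<sigma> x < n \<longleftrightarrow> x < n)"

lemma edge_rel_sym: "(x,y) \<in> edge_rel E \<Longrightarrow> (y,x) \<in> edge_rel E"
  by (auto simp: edge_rel_def insert_commute)

lemma rtrancl_edge_sym: "(x,y) \<in> (edge_rel E)\<^sup>* \<Longrightarrow> (y,x) \<in> (edge_rel E)\<^sup>*"
proof (induction rule: rtrancl_induct)
  case base then show ?case by simp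
next
  case (step y z) then show ?case by (meson converse_rtrancl_into_rtrancl edge_rel_sym)
qed

lemma edge_rel_mono: "E \<subseteq> E' \<Longrightarrow> edge_rel E \<subseteq> edge_rel E'"
  by (auto simp: edge_rel_def)

lemma rtrancl_edge_mono: "(x,y) \<in> (edge_rel E)\<^sup>* \<Longrightarrow> E \<subseteq> E' \<Longrightarrow> (x,y) \<in> (edge_rel E')\<^sup>*"
  using rtrancl_mono[OF edge_rel_mono] by blast

lemma edge_relI: "{x,y} \<in> E \<Longrightarrow> (x,y) \<in> edge_rel E"
  by (auto simp: edge_rel_def)

lemma edge_relD: "(x,y) \<in> edge_rel E \<Longrightarrow> {x,y} \<in> E"
  by (auto simp: edge_rel_def)

lemma path_cut:
  assumes "(x,y) \<in> (edge_rel E)\<^sup>*"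
  shows "(x,y) \<in> (edge_rel (E - {{u,v}}))\<^sup>* \<or> (x,u) \<in> (edge_rel (E - {{u,v}}))\<^sup>*
         \<or> (x,v) \<in> (edge_rel (E - {{u,v}}))\<^sup>*"
  using assms
proof (induction rule: rtrancl_induct)
  case base then show ?case by simp
next
  case (step y z)
  show ?case
  proof (cases "{y,z} = {u,v}")
    case True
    then have "y = u \<or> y = v" by (metis doubleton_eq_iff)
    with step.IH show ?thesis by blast
  next
    case False
    then have "(y,z) \<in> edge_rel (E - {{u,v}})" using step.hyps(2) by (auto simp: edge_rel_def)
    with step.IH show ?thesis by (meson rtrancl.rtrancl_into_rtrancl)
  qed
qed

lemma edge_rel_mapT: "(x,y) \<in> edge_rel T \<Longrightarrow> (\<sigma> x, \<sigma> y) \<in> edge_rel (mapT \<sigma> T)"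
proof -
  assume "(x,y) \<in> edge_rel T"
  then have "{x,y} \<in> T" by (rule edge_relD)
  then have "\<sigma> ` {x,y} \<in> mapT \<sigma> T" unfolding mapT_def by blast
  then show ?thesis by (simp add: edge_relI)
qed

lemma rtrancl_mapT: "(x,y) \<in> (edge_rel T)\<^sup>* \<Longrightarrow> (\<sigma> x, \<sigma> y) \<in> (edge_rel (mapT \<sigma> T))\<^sup>*"
proof (induction rule: rtrancl_induct)
  case base then show ?case by simp
next
  case (step y z) then show ?case by (meson edge_rel_mapT rtrancl.rtrancl_into_rtrancl)
qed

lemma perm_n_inv: "perm_n n \<sigma> \<Longrightarrow> perm_n n (inv \<sigma>)"
  unfolding perm_n_def
  by (metis bij_betw_imp_surj_on bij_imp_bij_inv surj_f_inv_f)

lemma mapT_inv1: "inj \<sigma> \<Longrightarrow> mapT (inv \<sigma>) (mapT \<sigma> X) = X"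
  unfolding mapT_def by (simp add: image_comp image_image)

lemma mapT_inv2: "surj \<sigma> \<Longrightarrow> mapT \<sigma> (mapT (inv \<sigma>) X) = X"
  unfolding mapT_def by (simp add: image_comp image_image surj_f_inv_f)

lemma inj_image_set: "inj \<sigma> \<Longrightarrow> inj (\<lambda>e. \<sigma> ` e)"
  by (simp add: inj_on_def inj_image_eq_iff)

lemma mem_mapT: "inj \<sigma> \<Longrightarrow> (\<sigma> ` e \<in> mapT \<sigma> T) \<longleftrightarrow> e \<in> T"
  unfolding mapT_def using inj_image_mem_iff[OF inj_image_set] by blast

lemma mapT_diff: "inj \<sigma> \<Longrightarrow> mapT \<sigma> (T - {e}) = mapT \<sigma> T - {\<sigma> ` e}"
proof -
  assume "inj \<sigma>"
  then have i: "inj (\<lambda>e. \<sigma> ` e)" by (rule inj_image_set)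
  show ?thesis unfolding mapT_def using image_set_diff[OF i, of T "{e}"] by simp
qed

lemma spanning_tree_mapT:
  assumes p: "perm_n n \<sigma>" and st: "spanning_tree n T"
  shows "spanning_tree n (mapT \<sigma> T)"
proof -
  have bij: "bij \<sigma>" and lt: "\<And>x. \<sigma> x < n \<longleftrightarrow> x < n" using p by (auto simp: perm_n_def)
  have inj: "inj \<sigma>" and surj: "surj \<sigma>" using bij bij_is_inj bij_is_surj by auto
  have ilt: "\<And>x. inv \<sigma> x < n \<longleftrightarrow> x < n" using perm_n_inv[OF p] by (auto simp: perm_n_def)
  have sif: "\<And>x. \<sigma> (inv \<sigma> x) = x" using surj by (simp add: surj_f_inv_f)
  have T1: "T \<subseteq> complete_edges n" and T2: "\<forall>u<n. \<forall>v<n. (u, v) \<in> (edge_rel T)\<^sup>*"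
    and T3: "\<forall>e\<in>T. \<forall>u v. e = {u, v} \<longrightarrow> (u, v) \<notin> (edge_rel (T - {e}))\<^sup>*"
    using st by (auto simp: spanning_tree_def)
  have A: "mapT \<sigma> T \<subseteq> complete_edges n"
  proof
    fix e' assume "e' \<in> mapT \<sigma> T"
    then obtain e where e: "e \<in> T" "e' = \<sigma> ` e" by (auto simp: mapT_def)
    then obtain u v where "e = {u,v}" "u < n" "v < n" "u \<noteq> v" using T1 by (auto simp: complete_edges_def)
    then show "e' \<in> complete_edges n" using e inj lt unfolding complete_edges_def
      by (auto dest: injD)
  qed
  have B: "\<forall>u<n. \<forall>v<n. (u, v) \<in> (edge_rel (mapT \<sigma> T))\<^sup>*"
  proof (intro allI impI)
    fix u v assume "u < n" "v < n"
    then have "(inv \<sigma> u, inv \<sigma> v) \<in> (edge_rel T)\<^sup>*" using T2 ilt by auto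
    from rtrancl_mapT[OF this, of \<sigma>] show "(u, v) \<in> (edge_rel (mapT \<sigma> T))\<^sup>*" by (simp add: sif)
  qed
  have C: "\<forall>e'\<in>mapT \<sigma> T. \<forall>u v. e' = {u, v} \<longrightarrow> (u, v) \<notin> (edge_rel (mapT \<sigma> T - {e'}))\<^sup>*"
  proof (intro ballI allI impI notI)
    fix e' u v assume e': "e' \<in> mapT \<sigma> T" "e' = {u,v}" and r: "(u, v) \<in> (edge_rel (mapT \<sigma> T - {e'}))\<^sup>*"
    obtain e where e: "e \<in> T" "e' = \<sigma> ` e" using e'(1) by (auto simp: mapT_def)
    have "e = inv \<sigma> ` e'" using e(2) inj by (simp add: image_comp)
    then have e2: "e = {inv \<sigma> u, inv \<sigma> v}" using e' by simp
    have "mapT \<sigma> T - {e'} = mapT \<sigma> (T - {e})" using mapT_diff[OF inj] e by simp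
    with r have "(u, v) \<in> (edge_rel (mapT \<sigma> (T - {e})))\<^sup>*" by simp
    from rtrancl_mapT[OF this, of "inv \<sigma>"] have "(inv \<sigma> u, inv \<sigma> v) \<in> (edge_rel (T - {e}))\<^sup>*"
      using mapT_inv1[OF inj] by simp
    then show False using T3 e(1) e2 by blast
  qed
  show ?thesis using A B C by (simp add: spanning_tree_def)
qed

lemma ST_bij: "perm_n n \<sigma> \<Longrightarrow> bij_betw (mapT \<sigma>) (spanning_trees n) (spanning_trees n)"
proof -
  assume p: "perm_n n \<sigma>"
  have inj: "inj \<sigma>" and surj: "surj \<sigma>" using p by (auto simp: perm_n_def bij_is_inj bij_is_surj)
  show ?thesis
    apply (rule bij_betw_byWitness[where f'="mapT (inv \<sigma>)"])
    using mapT_inv1[OF inj] mapT_inv2[OF surj] spanning_tree_mapT[OF p] spanning_tree_mapT[OF perm_n_inv[OF p]]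
    by (auto simp: spanning_trees_def)
qed

lemma card_inv:
  assumes p: "perm_n n \<sigma>"
  shows "card {T \<in> spanning_trees n. P (mapT \<sigma> T)} = card {T \<in> spanning_trees n. P T}"
proof -
  have surj: "surj \<sigma>" using p by (auto simp: perm_n_def bij_is_surj)
  have b: "bij_betw (mapT \<sigma>) (spanning_trees n) (spanning_trees n)" using ST_bij[OF p] .
  have "mapT \<sigma> ` {T \<in> spanning_trees n. P (mapT \<sigma> T)} = {T \<in> spanning_trees n. P T}"
  proof
    show "mapT \<sigma> ` {T \<in> spanning_trees n. P (mapT \<sigma> T)} \<subseteq> {T \<in> spanning_trees n. P T}"
      using b by (auto simp: bij_betw_def)
  next
    show "{T \<in> spanning_trees n. P T} \<subseteq> mapT \<sigma> ` {T \<in> spanning_trees n. P (mapT \<sigma> T)}"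
    proof
      fix T assume T: "T \<in> {T \<in> spanning_trees n. P T}"
      have "mapT (inv \<sigma>) T \<in> spanning_trees n"
        using T spanning_tree_mapT[OF perm_n_inv[OF p]] by (auto simp: spanning_trees_def)
      moreover have "mapT \<sigma> (mapT (inv \<sigma>) T) = T" using mapT_inv2[OF surj] .
      ultimately show "T \<in> mapT \<sigma> ` {T \<in> spanning_trees n. P (mapT \<sigma> T)}" using T
        by (metis (mono_tags, lifting) image_eqI mem_Collect_eq)
    qed
  qed
  moreover have "bij_betw (mapT \<sigma>) {T \<in> spanning_trees n. P (mapT \<sigma> T)} (mapT \<sigma> ` {T \<in> spanning_trees n. P (mapT \<sigma> T)})"
    using b by (auto intro: bij_betw_subset)
  ultimately show ?thesis by (metis bij_betw_same_card)
qed

definition sw :: "nat \<Rightarrow> nat \<Rightarrow> nat \<Rightarrow> nat" where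
  "sw a b x = (if x = a then b else if x = b then a else x)"

lemma sw_invol: "sw a b (sw a b x) = x"
  by (auto simp: sw_def)

lemma bij_sw: "bij (sw a b)"
  by (rule o_bij[where g="sw a b"]) (auto simp: fun_eq_iff sw_invol)

lemma perm_n_sw: "a < n \<Longrightarrow> b < n \<Longrightarrow> perm_n n (sw a b)"
  unfolding perm_n_def using bij_sw by (auto simp: sw_def)

lemma perm_n_comp: "perm_n n \<sigma> \<Longrightarrow> perm_n n \<tau> \<Longrightarrow> perm_n n (\<tau> \<circ> \<sigma>)"
  unfolding perm_n_def by (auto intro: bij_comp)

lemma perm_exists:
  "distinct xs \<Longrightarrow> distinct ys \<Longrightarrow> length xs = length ys \<Longrightarrow> set xs \<subseteq> {..<n} \<Longrightarrow> set ys \<subseteq> {..<n}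
   \<Longrightarrow> \<exists>\<sigma>. perm_n n \<sigma> \<and> map \<sigma> xs = ys"
proof (induction xs arbitrary: ys)
  case Nil
  then show ?case by (auto simp: perm_n_def intro!: exI[of _ id])
next
  case (Cons x xs)
  then obtain y ys' where ys: "ys = y # ys'" by (cases ys) auto
  from Cons obtain \<sigma> where s: "perm_n n \<sigma>" "map \<sigma> xs = ys'" using ys by auto
  define z where "z = \<sigma> x"
  have inj: "inj \<sigma>" using s(1) by (auto simp: perm_n_def bij_is_inj)
  have zn: "z \<notin> set ys'"
  proof
    assume "z \<in> set ys'"
    then have "\<sigma> x \<in> \<sigma> ` set xs" using s(2) z_def by auto
    then have "x \<in> set xs" using inj_image_mem_iff[OF inj] by blast
    then show False using Cons.prems(1) by simp
  qed
  have yn: "y \<notin> set ys'" using Cons.prems(2) ys by auto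
  have zlt: "z < n" using s(1) Cons.prems(4) unfolding z_def perm_n_def by auto
  have ylt: "y < n" using Cons.prems(5) ys by auto
  have p: "perm_n n (sw z y \<circ> \<sigma>)" using perm_n_comp[OF s(1) perm_n_sw[OF zlt ylt]] .
  have "map (sw z y \<circ> \<sigma>) xs = ys'"
  proof -
    have "map (sw z y \<circ> \<sigma>) xs = map (sw z y) ys'" using s(2) by (metis map_map)
    also have "\<dots> = ys'" using zn yn by (induction ys') (auto simp: sw_def)
    finally show ?thesis .
  qed
  moreover have "(sw z y \<circ> \<sigma>) x = y" by (simp add: z_def sw_def)
  ultimately show ?case using p ys by auto
qed

lemma K_eq: "complete_edges n = {A. A \<subseteq> {..<n} \<and> card A = 2}"
proof
  show "complete_edges n \<subseteq> {A. A \<subseteq> {..<n} \<and> card A = 2}"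
    unfolding complete_edges_def by auto
  show "{A. A \<subseteq> {..<n} \<and> card A = 2} \<subseteq> complete_edges n"
  proof
    fix A assume "A \<in> {A. A \<subseteq> {..<n} \<and> card A = 2}"
    then obtain x y where "A = {x,y}" "x \<noteq> y" "A \<subseteq> {..<n}" by (auto simp: card_2_iff)
    then show "A \<in> complete_edges n" unfolding complete_edges_def by blast
  qed
qed

lemma finite_K: "finite (complete_edges n)"
  unfolding K_eq by (rule finite_subset[of _ "Pow {..<n}"]) auto

lemma card_K: "card (complete_edges n) = n choose 2"
  unfolding K_eq using n_subsets[of "{..<n}" 2] by simp

lemma finite_ST: "finite (spanning_trees n)"
  by (rule finite_subset[of _ "Pow (complete_edges n)"]) (auto simp: spanning_trees_def spanning_tree_def finite_K)

lemma ST_sub: "T \<in> spanning_trees n \<Longrightarrow> T \<subseteq> complete_edges n"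
  by (auto simp: spanning_trees_def spanning_tree_def)

lemma finite_T: "T \<in> spanning_trees n \<Longrightarrow> finite T"
  using ST_sub finite_K finite_subset by blast

lemma star_tree: "spanning_tree n {{0,v} | v. 0 < v \<and> v < n}" (is "spanning_tree n ?S")
proof -
  have A: "?S \<subseteq> complete_edges n"
  proof
    fix e assume "e \<in> ?S"
    then obtain v where "e = {0,v}" "0 < v" "v < n" by blast
    moreover have "(0::nat) \<noteq> v" "(0::nat) < n" using \<open>0 < v\<close> \<open>v < n\<close> by simp_all
    ultimately show "e \<in> complete_edges n" unfolding complete_edges_def by blast
  qed
  have s0: "\<And>v. v < n \<Longrightarrow> (0, v) \<in> (edge_rel ?S)\<^sup>*"
  proof -
    fix v assume "v < n"
    show "(0, v) \<in> (edge_rel ?S)\<^sup>*"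
    proof (cases "v = 0")
      case False
      then have "0 < v" by simp
      then have "{0,v} \<in> ?S" using \<open>v<n\<close> by blast
      then show ?thesis by (meson edge_relI r_into_rtrancl)
    qed simp
  qed
  have B: "\<forall>u<n. \<forall>v<n. (u, v) \<in> (edge_rel ?S)\<^sup>*"
  proof (intro allI impI)
    fix u v assume "u < n" "v < n"
    have "(u, 0) \<in> (edge_rel ?S)\<^sup>*" using s0[OF \<open>u < n\<close>] by (rule rtrancl_edge_sym)
    then show "(u, v) \<in> (edge_rel ?S)\<^sup>*" using s0[OF \<open>v < n\<close>] by (rule rtrancl_trans)
  qed
  have C: "\<forall>e\<in>?S. \<forall>u v. e = {u, v} \<longrightarrow> (u, v) \<notin> (edge_rel (?S - {e}))\<^sup>*"
  proof (intro ballI allI impI notI)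
    fix e u v assume e: "e \<in> ?S" "e = {u,v}" and r: "(u, v) \<in> (edge_rel (?S - {e}))\<^sup>*"
    obtain w where w: "e = {0,w}" "0 < w" "w < n" using e(1) by blast
    have key: "\<And>x y. (x, y) \<in> (edge_rel (?S - {e}))\<^sup>* \<Longrightarrow> (x = w \<longleftrightarrow> y = w)"
    proof -
      fix x y assume "(x, y) \<in> (edge_rel (?S - {e}))\<^sup>*"
      then show "(x = w \<longleftrightarrow> y = w)"
      proof (induction rule: rtrancl_induct)
        case (step y z)
        have yz: "{y,z} \<in> ?S - {e}" using step.hyps(2) by (rule edge_relD)
        then have ne: "{y,z} \<noteq> e" and "{y,z} \<in> ?S" by auto
        then obtain v' where v': "{y,z} = {0,v'}" "0 < v'" by blast
        have "v' \<noteq> w" using ne v'(1) w(1) by auto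
        have "y \<in> {0,v'}" "z \<in> {0,v'}" using v'(1) by (metis insertI1, metis insert_commute insertI1)
        then have "y \<noteq> w \<and> z \<noteq> w" using \<open>v' \<noteq> w\<close> w(2) by auto
        then show ?case using step.IH by simp
      qed simp
    qed
    have "{u,v} = {0,w}" using e w by simp
    then have "(u = 0 \<and> v = w) \<or> (u = w \<and> v = 0)" by (simp only: doubleton_eq_iff)
    then show False using key[OF r] w(2) by auto
  qed
  show ?thesis unfolding spanning_tree_def using A B C by blast
qed

lemma ST_ne: "spanning_trees n \<noteq> {}"
  using star_tree[of n] by (auto simp: spanning_trees_def)

lemma has_edge:
  assumes "n \<ge> 2" "spanning_tree n T" "v < n"
  shows "\<exists>e\<in>T. v \<in> e"
proof -
  define u where "u = (if v = 0 then 1 else 0::nat)"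
  have "u < n" "u \<noteq> v" using assms by (auto simp: u_def)
  then have "(v, u) \<in> (edge_rel T)\<^sup>*" using assms by (auto simp: spanning_tree_def)
  then obtain w where "(v, w) \<in> edge_rel T" using \<open>u \<noteq> v\<close> by (metis converse_rtranclE)
  then have "{v,w} \<in> T" by (rule edge_relD)
  then show ?thesis by blast
qed

lemma card_T_lower:
  assumes "n \<ge> 2" "T \<in> spanning_trees n"
  shows "n \<le> 2 * card T"
proof -
  have st: "spanning_tree n T" using assms by (simp add: spanning_trees_def)
  have "{..<n} \<subseteq> \<Union>T" using has_edge[OF assms(1) st] by auto
  moreover have "\<Union>T \<subseteq> {..<n}" using ST_sub[OF assms(2)] by (auto simp: K_eq)
  ultimately have "n \<le> card (\<Union>T)"
    by (metis card_lessThan card_mono finite_lessThan finite_subset)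
  also have "\<dots> \<le> sum card T" by (rule card_Union_le_sum_card)
  also have "\<dots> = sum (\<lambda>e. 2) T"
    using ST_sub[OF assms(2)] by (intro sum.cong) (auto simp: K_eq)
  also have "\<dots> = 2 * card T" by simp
  finally show ?thesis .
qed

lemma card_T_upper:
  assumes "n \<ge> 1" "T \<in> spanning_trees n"
  shows "card T \<le> n - 1"
proof -
  have st: "spanning_tree n T" using assms by (simp add: spanning_trees_def)
  have T1: "T \<subseteq> complete_edges n" and T2: "\<forall>u<n. \<forall>v<n. (u, v) \<in> (edge_rel T)\<^sup>*"
    and T3: "\<forall>e\<in>T. \<forall>u v. e = {u, v} \<longrightarrow> (u, v) \<notin> (edge_rel (T - {e}))\<^sup>*"
    using st by (auto simp: spanning_tree_def)
  define \<phi> where "\<phi> e = (SOME w. w \<in> e \<and> (0, w) \<notin> (edge_rel (T - {e}))\<^sup>*)" for e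
  have ex: "\<exists>w. w \<in> e \<and> (0, w) \<notin> (edge_rel (T - {e}))\<^sup>*" if eT: "e \<in> T" for e
  proof -
    obtain u v where uv: "e = {u,v}" using eT T1 by (auto simp: complete_edges_def)
    have "(u, v) \<notin> (edge_rel (T - {e}))\<^sup>*" using T3 eT uv by blast
    then have "(0,u) \<notin> (edge_rel (T - {e}))\<^sup>* \<or> (0,v) \<notin> (edge_rel (T - {e}))\<^sup>*"
      by (meson rtrancl_edge_sym rtrancl_trans)
    then show ?thesis using uv by blast
  qed
  have phi: "\<phi> e \<in> e \<and> (0, \<phi> e) \<notin> (edge_rel (T - {e}))\<^sup>*" if "e \<in> T" for e
    unfolding \<phi>_def using someI_ex[OF ex[OF that]] .
  have img: "\<phi> ` T \<subseteq> {1..<n}"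
  proof
    fix w assume "w \<in> \<phi> ` T"
    then obtain e where e: "e \<in> T" "w = \<phi> e" by auto
    have "w \<noteq> 0" using phi[OF e(1)] e(2) by (metis rtrancl.rtrancl_refl)
    moreover have "w < n" using phi[OF e(1)] e T1 by (auto simp: complete_edges_def)
    ultimately show "w \<in> {1..<n}" by auto
  qed
  have inj: "inj_on \<phi> T"
  proof (rule inj_onI, rule ccontr)
    fix e f assume e: "e \<in> T" and f: "f \<in> T" and eq: "\<phi> e = \<phi> f" and ne: "e \<noteq> f"
    define w where "w = \<phi> e"
    have we: "w \<in> e" and nwe: "(0, w) \<notin> (edge_rel (T - {e}))\<^sup>*" using phi[OF e] w_def by auto
    have wf: "w \<in> f" and nwf: "(0, w) \<notin> (edge_rel (T - {f}))\<^sup>*" using phi[OF f] w_def eq by auto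
    obtain x where ex: "e = {w,x}" using we e T1 by (auto simp: complete_edges_def doubleton_eq_iff)
    obtain y where fy: "f = {w,y}" using wf f T1 by (auto simp: complete_edges_def doubleton_eq_iff)
    have "w < n" using img e w_def by auto
    then have "(0, w) \<in> (edge_rel T)\<^sup>*" using T2 assms(1) by auto
    from path_cut[OF this, of w x] have "(0, x) \<in> (edge_rel (T - {e}))\<^sup>*" using nwe ex by auto
    from path_cut[OF this, of w y]
    have c: "(0, x) \<in> (edge_rel (T - {e} - {f}))\<^sup>* \<or> (0, w) \<in> (edge_rel (T - {e} - {f}))\<^sup>*
             \<or> (0, y) \<in> (edge_rel (T - {e} - {f}))\<^sup>*" using fy by simp
    have fe: "f \<in> T - {e}" using f ne by auto
    have ef: "e \<in> T - {f}" using e ne by auto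
    show False
    proof -
      { assume "(0, w) \<in> (edge_rel (T - {e} - {f}))\<^sup>*"
        then have "(0, w) \<in> (edge_rel (T - {e}))\<^sup>*" by (rule rtrancl_edge_mono) auto
        with nwe have False by simp }
      moreover
      { assume "(0, y) \<in> (edge_rel (T - {e} - {f}))\<^sup>*"
        then have "(0, y) \<in> (edge_rel (T - {e}))\<^sup>*" by (rule rtrancl_edge_mono) auto
        moreover have "(y, w) \<in> edge_rel (T - {e})" using fe fy by (intro edge_relI) (simp add: insert_commute)
        ultimately have "(0, w) \<in> (edge_rel (T - {e}))\<^sup>*" by (rule rtrancl_into_rtrancl)
        with nwe have False by simp }
      moreover
      { assume "(0, x) \<in> (edge_rel (T - {e} - {f}))\<^sup>*"
        then have "(0, x) \<in> (edge_rel (T - {f}))\<^sup>*" by (rule rtrancl_edge_mono) auto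
        moreover have "(x, w) \<in> edge_rel (T - {f})" using ef ex by (intro edge_relI) (simp add: insert_commute)
        ultimately have "(0, w) \<in> (edge_rel (T - {f}))\<^sup>*" by (rule rtrancl_into_rtrancl)
        with nwf have False by simp }
      ultimately show False using c by blast
    qed
  qed
  have "card T \<le> card {1..<n}" using card_inj_on_le[OF inj img] by simp
  then show ?thesis by simp
qed

lemma card_filter_sum: "finite A \<Longrightarrow> card {a \<in> A. P a} = (\<Sum>a\<in>A. if P a then 1 else 0)"
proof -
  assume fin: "finite A"
  have "card {a\<in>A. P a} = (\<Sum>a\<in>{a\<in>A. P a}. (1::nat))" by simp
  also have "\<dots> = (\<Sum>a\<in>A. if P a then 1 else 0)" using fin by (rule sum.inter_filter)
  finally show ?thesis .
qed

lemma sum_card_swap: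
  assumes "finite A" "finite B"
  shows "(\<Sum>a\<in>A. card {b \<in> B. P a b}) = (\<Sum>b\<in>B. card {a \<in> A. P a b})"
proof -
  have "(\<Sum>a\<in>A. card {b \<in> B. P a b}) = (\<Sum>a\<in>A. \<Sum>b\<in>B. if P a b then 1 else 0)"
    using assms by (simp add: card_filter_sum)
  also have "\<dots> = (\<Sum>b\<in>B. \<Sum>a\<in>A. if P a b then 1 else 0)" by (rule sum.swap)
  also have "\<dots> = (\<Sum>b\<in>B. card {a \<in> A. P a b})"
    using assms by (simp add: card_filter_sum)
  finally show ?thesis .
qed

lemma card_offdiag: "finite A \<Longrightarrow> card {p \<in> A \<times> A. fst p \<noteq> snd p} = card A * (card A - 1)"
proof -
  assume fin: "finite A"
  have eq: "{p \<in> A \<times> A. fst p \<noteq> snd p} = A \<times> A - (\<lambda>x. (x,x)) ` A" by auto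
  have "card ((\<lambda>x. (x,x)) ` A) = card A" by (rule card_image) (auto simp: inj_on_def)
  then have "card {p \<in> A \<times> A. fst p \<noteq> snd p} = card A * card A - card A"
    unfolding eq using fin by (subst card_Diff_subset) (auto simp: card_cartesian_product)
  then show ?thesis by (simp add: diff_mult_distrib2)
qed

definition c1 :: "nat \<Rightarrow> nat set \<Rightarrow> nat" where
  "c1 n e = card {T \<in> spanning_trees n. e \<in> T}"

definition c2 :: "nat \<Rightarrow> nat set \<Rightarrow> nat set \<Rightarrow> nat" where
  "c2 n e f = card {T \<in> spanning_trees n. e \<in> T \<and> f \<in> T}"

definition DP :: "nat \<Rightarrow> (nat set \<times> nat set) set" where
  "DP n = {p \<in> complete_edges n \<times> complete_edges n. fst p \<inter> snd p = {}}"

lemma K_elim: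
  assumes "e \<in> complete_edges n"
  obtains a b where "e = {a,b}" "a \<noteq> b" "a < n" "b < n"
  using assms unfolding complete_edges_def by blast

lemma c1_const:
  assumes "e \<in> complete_edges n" "f \<in> complete_edges n"
  shows "c1 n e = c1 n f"
proof -
  obtain a b where e: "e = {a,b}" "a \<noteq> b" "a < n" "b < n" using assms(1) by (rule K_elim)
  obtain c d where f: "f = {c,d}" "c \<noteq> d" "c < n" "d < n" using assms(2) by (rule K_elim)
  obtain \<sigma> where \<sigma>: "perm_n n \<sigma>" "map \<sigma> [a,b] = [c,d]"
    using perm_exists[of "[a,b]" "[c,d]" n] e f by auto
  have inj: "inj \<sigma>" using \<sigma>(1) by (auto simp: perm_n_def bij_is_inj)
  have fe: "f = \<sigma> ` e" using \<sigma>(2) e f by auto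
  have "c1 n f = card {T \<in> spanning_trees n. f \<in> mapT \<sigma> T}"
    unfolding c1_def using card_inv[OF \<sigma>(1), of "\<lambda>T. f \<in> T"] by simp
  also have "\<dots> = c1 n e" unfolding c1_def fe mem_mapT[OF inj] by simp
  finally show ?thesis by simp
qed

lemma c2_const:
  assumes "(e,f) \<in> DP n" "(e',f') \<in> DP n"
  shows "c2 n e f = c2 n e' f'"
proof -
  have ee: "e \<in> complete_edges n" "f \<in> complete_edges n" "e \<inter> f = {}"
    and ee': "e' \<in> complete_edges n" "f' \<in> complete_edges n" "e' \<inter> f' = {}"
    using assms by (auto simp: DP_def)
  obtain a b where e: "e = {a,b}" "a \<noteq> b" "a < n" "b < n" using ee(1) by (rule K_elim)
  obtain c d where f: "f = {c,d}" "c \<noteq> d" "c < n" "d < n" using ee(2) by (rule K_elim)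
  obtain a' b' where e': "e' = {a',b'}" "a' \<noteq> b'" "a' < n" "b' < n" using ee'(1) by (rule K_elim)
  obtain c' d' where f': "f' = {c',d'}" "c' \<noteq> d'" "c' < n" "d' < n" using ee'(2) by (rule K_elim)
  have d1: "distinct [a,b,c,d]" using e f ee(3) by auto
  have d2: "distinct [a',b',c',d']" using e' f' ee'(3) by auto
  obtain \<sigma> where \<sigma>: "perm_n n \<sigma>" "map \<sigma> [a,b,c,d] = [a',b',c',d']"
    using perm_exists[OF d1 d2] e f e' f' by auto
  have inj: "inj \<sigma>" using \<sigma>(1) by (auto simp: perm_n_def bij_is_inj)
  have fe: "e' = \<sigma> ` e" "f' = \<sigma> ` f" using \<sigma>(2) e f e' f' by auto
  have "c2 n e' f' = card {T \<in> spanning_trees n. e' \<in> mapT \<sigma> T \<and> f' \<in> mapT \<sigma> T}"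
    unfolding c2_def using card_inv[OF \<sigma>(1), of "\<lambda>T. e' \<in> T \<and> f' \<in> T"] by simp
  also have "\<dots> = c2 n e f" unfolding c2_def fe mem_mapT[OF inj] by simp
  finally show ?thesis by simp
qed

lemma sum_c1_M:
  assumes "M \<subseteq> complete_edges n"
  shows "(\<Sum>e\<in>M. c1 n e) = (\<Sum>T\<in>spanning_trees n. card (T \<inter> M))"
proof -
  have fM: "finite M" using assms finite_K finite_subset by blast
  have "(\<Sum>e\<in>M. c1 n e) = (\<Sum>T\<in>spanning_trees n. card {e \<in> M. e \<in> T})"
    unfolding c1_def by (rule sum_card_swap[OF fM finite_ST])
  also have "\<dots> = (\<Sum>T\<in>spanning_trees n. card (T \<inter> M))"
    by (intro sum.cong refl arg_cong[where f=card]) auto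
  finally show ?thesis .
qed

lemma sum_c1_K: "(\<Sum>e\<in>complete_edges n. c1 n e) = (\<Sum>T\<in>spanning_trees n. card T)"
proof -
  have "(\<Sum>e\<in>complete_edges n. c1 n e) = (\<Sum>T\<in>spanning_trees n. card (T \<inter> complete_edges n))"
    by (rule sum_c1_M) simp
  also have "\<dots> = (\<Sum>T\<in>spanning_trees n. card T)"
    using ST_sub by (intro sum.cong refl) (simp add: Int_absorb2)
  finally show ?thesis .
qed

lemma sum_c2_OD:
  assumes "M \<subseteq> complete_edges n"
  shows "(\<Sum>p\<in>{p \<in> M \<times> M. fst p \<noteq> snd p}. c2 n (fst p) (snd p))
         = (\<Sum>T\<in>spanning_trees n. card (T \<inter> M) * (card (T \<inter> M) - 1))"
proof -
  have fM: "finite M" using assms finite_K finite_subset by blast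
  have fO: "finite {p \<in> M \<times> M. fst p \<noteq> snd p}" using fM by simp
  have "(\<Sum>p\<in>{p \<in> M \<times> M. fst p \<noteq> snd p}. c2 n (fst p) (snd p))
       = (\<Sum>T\<in>spanning_trees n. card {p \<in> {p \<in> M \<times> M. fst p \<noteq> snd p}. fst p \<in> T \<and> snd p \<in> T})"
    unfolding c2_def by (rule sum_card_swap[OF fO finite_ST])
  also have "\<dots> = (\<Sum>T\<in>spanning_trees n. card {p \<in> (T \<inter> M) \<times> (T \<inter> M). fst p \<noteq> snd p})"
    by (intro sum.cong refl arg_cong[where f=card]) auto
  also have "\<dots> = (\<Sum>T\<in>spanning_trees n. card (T \<inter> M) * (card (T \<inter> M) - 1))"
    using fM by (intro sum.cong refl card_offdiag) simp
  finally show ?thesis .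
qed

lemma sum_c2_DP:
  assumes "n \<ge> 1"
  shows "(\<Sum>p\<in>DP n. c2 n (fst p) (snd p)) \<le> card (spanning_trees n) * (n - 1) * (n - 1)"
proof -
  have fD: "finite (DP n)" unfolding DP_def using finite_K by simp
  have "(\<Sum>p\<in>DP n. c2 n (fst p) (snd p))
       = (\<Sum>T\<in>spanning_trees n. card {p \<in> DP n. fst p \<in> T \<and> snd p \<in> T})"
    unfolding c2_def by (rule sum_card_swap[OF fD finite_ST])
  also have "\<dots> \<le> (\<Sum>T\<in>spanning_trees n. card (T \<times> T))"
  proof (rule sum_mono)
    fix T assume T: "T \<in> spanning_trees n"
    show "card {p \<in> DP n. fst p \<in> T \<and> snd p \<in> T} \<le> card (T \<times> T)"
      by (rule card_mono) (auto simp: finite_T[OF T])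
  qed
  also have "\<dots> \<le> (\<Sum>T\<in>spanning_trees n. (n - 1) * (n - 1))"
  proof (rule sum_mono)
    fix T assume T: "T \<in> spanning_trees n"
    have "card T \<le> n - 1" using card_T_upper[OF assms T] .
    then show "card (T \<times> T) \<le> (n - 1) * (n - 1)" by (simp add: card_cartesian_product mult_le_mono)
  qed
  also have "\<dots> = card (spanning_trees n) * (n - 1) * (n - 1)" by simp
  finally show ?thesis .
qed

lemma card_DP:
  assumes "n \<ge> 2"
  shows "card (DP n) = (n choose 2) * ((n - 2) choose 2)"
proof -
  have eq: "DP n = (SIGMA e:complete_edges n. {f \<in> complete_edges n. e \<inter> f = {}})"
    unfolding DP_def by auto
  have c: "card {f \<in> complete_edges n. e \<inter> f = {}} = (n - 2) choose 2" if e: "e \<in> complete_edges n" for e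
  proof -
    have "{f \<in> complete_edges n. e \<inter> f = {}} = {A. A \<subseteq> {..<n} - e \<and> card A = 2}"
      unfolding K_eq by auto
    moreover have "card ({..<n} - e) = n - 2"
    proof -
      have "e \<subseteq> {..<n}" "card e = 2" using e unfolding K_eq by auto
      then show ?thesis by (simp add: card_Diff_subset finite_subset)
    qed
    ultimately show ?thesis using n_subsets[of "{..<n} - e" 2] by simp
  qed
  have "card (DP n) = (\<Sum>e\<in>complete_edges n. card {f \<in> complete_edges n. e \<inter> f = {}})"
    unfolding eq using finite_K by (subst card_SigmaI) auto
  also have "\<dots> = (\<Sum>e\<in>complete_edges n. (n - 2) choose 2)" using c by (intro sum.cong) auto
  also have "\<dots> = (n choose 2) * ((n - 2) choose 2)" by (simp add: card_K)
  finally show ?thesis .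
qed

lemma real_choose2: "real (m choose 2) = real m * (real m - 1) / 2"
proof (induction m)
  case 0 then show ?case by simp
next
  case (Suc m)
  have "(Suc m) choose 2 = (m choose 1) + (m choose 2)" by (simp add: numeral_2_eq_2)
  then have "real ((Suc m) choose 2) = real m + real (m choose 2)" by simp
  then show ?case using Suc by (simp add: field_simps)
qed

lemma ind_bound: "real (if j \<noteq> 0 then 1 else 0) \<ge> real j - real j * (real j - 1) / 2"
proof (cases "j = 0")
  case False
  then have "real j \<ge> 1" by simp
  have "0 \<le> (real j - 1) * (real j - 2)" 
  proof (cases "j = 1")
    case False
    then have "real j \<ge> 2" using \<open>j \<noteq> 0\<close> by linarith
    then show ?thesis by simp
  qed simp
  moreover have "1 - (real j - real j * (real j - 1) / 2) = (real j - 1) * (real j - 2) / 2"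
    by (simp add: field_simps)
  ultimately show ?thesis using False by simp
qed simp

lemma hit_prob:
  assumes n: "n \<ge> 8" and M: "M \<subseteq> complete_edges n"
    and disj: "\<forall>e\<in>M. \<forall>f\<in>M. e \<noteq> f \<longrightarrow> e \<inter> f = {}"
  shows "measure_pmf.prob (pmf_of_set (spanning_trees n)) {T. T \<inter> M \<noteq> {}}
         \<ge> real (card M) / real n - 4 * (real (card M))\<^sup>2 / (real n)\<^sup>2"
proof -
  define ST where "ST = spanning_trees n"
  define N where "N = card ST"
  define s where "s = card M"
  have fM: "finite M" using M finite_K finite_subset by blast
  have fST: "finite ST" unfolding ST_def by (rule finite_ST)
  have Npos: "N > 0" unfolding N_def ST_def using finite_ST ST_ne by (simp add: card_gt_0_iff)
  define e0 where "e0 = {0::nat,1}"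
  define f0 where "f0 = {2::nat,3}"
  have e0K: "e0 \<in> complete_edges n" using n unfolding e0_def complete_edges_def by force
  have f0K: "f0 \<in> complete_edges n" using n unfolding f0_def complete_edges_def by force
  have ef0: "(e0, f0) \<in> DP n" using e0K f0K unfolding DP_def e0_def f0_def by auto
  define c where "c = c1 n e0"
  define d where "d = c2 n e0 f0"
  have hc: "\<And>e. e \<in> complete_edges n \<Longrightarrow> c1 n e = c" unfolding c_def using c1_const e0K by blast
  have hd: "\<And>p. p \<in> DP n \<Longrightarrow> c2 n (fst p) (snd p) = d" unfolding d_def
    using c2_const ef0 by (metis prod.collapse)
  have s1: "card (complete_edges n) * c = (\<Sum>T\<in>ST. card T)"
  proof -
    have "(\<Sum>e\<in>complete_edges n. c1 n e) = card (complete_edges n) * c" using hc by simp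
    then show ?thesis using sum_c1_K[of n] unfolding ST_def by simp
  qed
  have s1': "N * n \<le> 2 * (\<Sum>T\<in>ST. card T)"
  proof -
    have "(\<Sum>T\<in>ST. n) \<le> (\<Sum>T\<in>ST. 2 * card T)"
      using card_T_lower n unfolding ST_def by (intro sum_mono) auto
    then show ?thesis unfolding N_def by (simp add: sum_distrib_left)
  qed
  have s2: "card (DP n) * d \<le> N * (n - 1) * (n - 1)"
  proof -
    have "(\<Sum>p\<in>DP n. c2 n (fst p) (snd p)) = card (DP n) * d" using hd by simp
    then show ?thesis using sum_c2_DP[of n] n unfolding N_def ST_def by simp
  qed
  define j where "j T = card (T \<inter> M)" for T
  have cnt: "card {T \<in> ST. T \<inter> M \<noteq> {}} = (\<Sum>T\<in>ST. if j T \<noteq> 0 then 1 else 0)"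
  proof -
    have "\<And>T. (T \<inter> M \<noteq> {}) = (j T \<noteq> 0)" unfolding j_def using fM by auto
    then show ?thesis using card_filter_sum[OF fST, of "\<lambda>T. T \<inter> M \<noteq> {}"] by simp
  qed
  have sj: "(\<Sum>T\<in>ST. j T) = s * c"
  proof -
    have "(\<Sum>e\<in>M. c1 n e) = s * c" using hc M unfolding s_def by (simp add: subset_iff)
    then show ?thesis using sum_c1_M[OF M] unfolding ST_def j_def by simp
  qed
  have sjj: "(\<Sum>T\<in>ST. j T * (j T - 1)) = s * (s - 1) * d"
  proof -
    have sub: "{p \<in> M \<times> M. fst p \<noteq> snd p} \<subseteq> DP n"
    proof (rule subsetI)
      fix p assume pm: "p \<in> {p \<in> M \<times> M. fst p \<noteq> snd p}"
      obtain a b where ab0: "p = (a,b)" by (cases p)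
      have ab: "p = (a,b)" "a \<in> M" "b \<in> M" "a \<noteq> b" using pm ab0 by simp_all
      then have "a \<inter> b = {}" using disj by blast
      then show "p \<in> DP n" using ab M unfolding DP_def by auto
    qed
    have "(\<Sum>p\<in>{p \<in> M \<times> M. fst p \<noteq> snd p}. c2 n (fst p) (snd p))
          = (\<Sum>p\<in>{p \<in> M \<times> M. fst p \<noteq> snd p}. d)" using hd sub by (intro sum.cong) auto
    also have "\<dots> = s * (s - 1) * d" using card_offdiag[OF fM] unfolding s_def by simp
    finally show ?thesis using sum_c2_OD[OF M] unfolding ST_def j_def by simp
  qed
  have s3: "real (card {T \<in> ST. T \<inter> M \<noteq> {}}) \<ge> real s * c - real s * (real s - 1) * d / 2"
  proof -
    have "real (card {T \<in> ST. T \<inter> M \<noteq> {}}) = (\<Sum>T\<in>ST. real (if j T \<noteq> 0 then 1 else 0))"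
      unfolding cnt by (simp add: of_nat_sum)
    also have "\<dots> \<ge> (\<Sum>T\<in>ST. real (j T) - real (j T) * (real (j T) - 1) / 2)"
      by (intro sum_mono ind_bound)
    finally have a: "real (card {T \<in> ST. T \<inter> M \<noteq> {}}) \<ge>
        (\<Sum>T\<in>ST. real (j T)) - (\<Sum>T\<in>ST. real (j T) * (real (j T) - 1)) / 2"
      by (simp add: sum_subtractf sum_divide_distrib)
    have b: "(\<Sum>T\<in>ST. real (j T)) = real s * c" using arg_cong[OF sj, of real] by (simp add: of_nat_sum)
    have jj: "\<And>T. real (j T) * (real (j T) - 1) = real (j T * (j T - 1))"
      by (case_tac "j T") (auto simp: algebra_simps)
    have ss: "real s * (real s - 1) = real (s * (s - 1))" by (cases s) (auto simp: algebra_simps)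
    have c: "(\<Sum>T\<in>ST. real (j T) * (real (j T) - 1)) = real s * (real s - 1) * d"
      unfolding jj ss using arg_cong[OF sjj, of real] by (simp add: of_nat_sum)
    show ?thesis using a b c by simp
  qed
  have prob: "measure_pmf.prob (pmf_of_set ST) {T. T \<inter> M \<noteq> {}} = real (card {T \<in> ST. T \<inter> M \<noteq> {}}) / N"
  proof -
    have "ST \<inter> {T. T \<inter> M \<noteq> {}} = {T \<in> ST. T \<inter> M \<noteq> {}}" by auto
    then show ?thesis using measure_pmf_of_set[of ST "{T. T \<inter> M \<noteq> {}}"] fST ST_ne
      unfolding N_def ST_def by simp
  qed
  define r where "r = real n"
  define x where "x = real s"
  have r8: "r \<ge> 8" using n unfolding r_def by simp
  have x0: "x \<ge> 0" unfolding x_def by simp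
  have xx: "x * (x - 1) \<ge> 0" unfolding x_def by (cases s) auto
  have NR: "real N > 0" using Npos by simp
  have KK: "real (card (complete_edges n)) = r * (r - 1) / 2" unfolding card_K real_choose2 r_def ..
  have DD: "real (card (DP n)) = r * (r - 1) / 2 * ((r - 2) * (r - 3) / 2)"
  proof -
    have B: "real ((n - 2) choose 2) = (r - 2) * (r - 3) / 2"
      unfolding real_choose2 r_def using n by (simp add: of_nat_diff)
    have A: "real (n choose 2) = r * (r - 1) / 2" unfolding real_choose2 r_def ..
    have n2: "n \<ge> 2" using n by simp
    show ?thesis by (simp only: card_DP[OF n2] of_nat_mult A B)
  qed
  have h1: "real c / real N \<ge> 1 / (r - 1)"
  proof -
    have "r * (r - 1) / 2 * c = real (\<Sum>T\<in>ST. card T)" using arg_cong[OF s1, of real] KK by simp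
    moreover have "real N * r \<le> 2 * real (\<Sum>T\<in>ST. card T)" using s1' unfolding r_def
      by (metis of_nat_le_iff of_nat_mult of_nat_numeral)
    ultimately have "real N * r \<le> r * ((r - 1) * c)" by (simp add: algebra_simps)
    then have "real N \<le> (r - 1) * c" using r8 by (simp add: mult.commute)
    then show ?thesis using NR r8 by (simp add: field_simps)
  qed
  have h2: "real d / real N \<le> 4 * (r - 1) / (r * (r - 2) * (r - 3))"
  proof -
    have "real (card (DP n) * d) \<le> real (N * (n - 1) * (n - 1))" using s2 by (simp only: of_nat_le_iff)
    then have "real (card (DP n)) * d \<le> real N * (r - 1) * (r - 1)" using n unfolding r_def
      by (simp add: of_nat_diff)
    then have "r * (r - 1) / 2 * ((r - 2) * (r - 3) / 2) * d \<le> real N * (r - 1) * (r - 1)"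
      unfolding DD .
    moreover have e1: "(r - 1) * (r * (r - 2) * (r - 3) * d) = 4 * (r * (r - 1) / 2 * ((r - 2) * (r - 3) / 2) * d)"
      by (simp add: field_simps)
    moreover have e2: "(r - 1) * (4 * real N * (r - 1)) = 4 * (real N * (r - 1) * (r - 1))" by simp
    ultimately have "(r - 1) * (r * (r - 2) * (r - 3) * d) \<le> (r - 1) * (4 * real N * (r - 1))"
      by linarith
    then have pr: "r * (r - 2) * (r - 3) * d \<le> 4 * real N * (r - 1)" using r8 by simp
    have X: "r * (r - 2) * (r - 3) > 0" using r8 by simp
    have "real d \<le> 4 * real N * (r - 1) / (r * (r - 2) * (r - 3))"
      using pr by (subst pos_le_divide_eq[OF X]) (simp add: mult.commute)
    then have "real d / real N \<le> (4 * real N * (r - 1) / (r * (r - 2) * (r - 3))) / real N"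
      using NR by (intro divide_right_mono) auto
    also have "\<dots> = 4 * (r - 1) / (r * (r - 2) * (r - 3))" using NR by simp
    finally show ?thesis .
  qed
  have h3: "4 * (r - 1) / (r * (r - 2) * (r - 3)) \<le> 8 / r\<^sup>2"
  proof -
    have "r * (r - 2) * (r - 3) > 0" using r8 by simp
    moreover have "4 * (r - 1) * r\<^sup>2 \<le> 8 * (r * (r - 2) * (r - 3))"
    proof -
      have q: "0 \<le> (r - 8) * (r - 1)" using r8 by simp
      have e: "2 * ((r - 2) * (r - 3)) - (r - 1) * r = (r - 8) * (r - 1) + 4" by (simp add: algebra_simps)
      have "(r - 1) * r \<le> 2 * ((r - 2) * (r - 3))" using q e by linarith
      then have "4 * r * ((r - 1) * r) \<le> 4 * r * (2 * ((r - 2) * (r - 3)))"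
        by (rule mult_left_mono) (use r8 in auto)
      then show ?thesis by (simp add: power2_eq_square algebra_simps)
    qed
    ultimately show ?thesis using r8 by (simp add: field_simps)
  qed
  have P: "measure_pmf.prob (pmf_of_set ST) {T. T \<inter> M \<noteq> {}} \<ge> x * (c / N) - x * (x - 1) / 2 * (d / N)"
    using prob s3 NR unfolding x_def by (simp add: field_simps)
  have "x * (c / N) \<ge> x * (1 / (r - 1))" using h1 x0 by (rule mult_left_mono)
  moreover have "x * (1 / (r - 1)) \<ge> x / r" using x0 r8 by (simp add: frac_le divide_left_mono)
  moreover have "x * (x - 1) / 2 * (d / N) \<le> x * (x - 1) / 2 * (8 / r\<^sup>2)"
    using h2 h3 xx by (intro mult_left_mono) auto
  moreover have "x * (x - 1) / 2 * (8 / r\<^sup>2) \<le> 4 * x\<^sup>2 / r\<^sup>2"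
    using x0 r8 by (simp add: field_simps power2_eq_square)
  ultimately have "measure_pmf.prob (pmf_of_set ST) {T. T \<inter> M \<noteq> {}} \<ge> x / r - 4 * x\<^sup>2 / r\<^sup>2"
    using P by linarith
  then show ?thesis unfolding ST_def x_def r_def s_def .
qed

definition blk :: "nat \<Rightarrow> nat \<Rightarrow> nat set" where
  "blk k j = {j*k..<j*k+k}"

definition Fb :: "nat \<Rightarrow> nat \<Rightarrow> nat set set" where
  "Fb k n = {e. \<exists>j<n div k. \<exists>x\<in>blk k j. \<exists>y\<in>blk k j. x \<noteq> y \<and> e = {x,y}}"

definition cmpl :: "nat \<Rightarrow> nat set set \<Rightarrow> nat \<Rightarrow> bool" where
  "cmpl k H j \<longleftrightarrow> (\<forall>x\<in>blk k j. \<forall>y\<in>blk k j. x \<noteq> y \<longrightarrow> {x,y} \<in> H)"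

definition CB :: "nat \<Rightarrow> nat \<Rightarrow> nat set set \<Rightarrow> nat set" where
  "CB k n H = {j. j < n div k \<and> cmpl k H j}"

definition good :: "nat \<Rightarrow> real \<Rightarrow> nat \<Rightarrow> nat set set \<Rightarrow> bool" where
  "good k \<epsilon> n H \<longleftrightarrow> real (card (CB k n H)) \<ge> (1 - \<epsilon>) * real n / real k"

definition strat :: "nat \<Rightarrow> nat \<Rightarrow> nat set set \<Rightarrow> nat set set \<Rightarrow> nat set" where
  "strat k n H T = (if \<exists>e\<in>T. e \<in> Fb k n - H then (SOME e. e \<in> T \<and> e \<in> Fb k n - H) else (SOME e. e \<in> T))"

lemma blk_div: "x \<in> blk k j \<Longrightarrow> x div k = j"
  unfolding blk_def by (auto intro: div_nat_eqI simp: mult.commute)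

lemma blk_lt: "j < n div k \<Longrightarrow> x \<in> blk k j \<Longrightarrow> x < n"
proof -
  assume j: "j < n div k" and x: "x \<in> blk k j"
  have "x < j * k + k" using x by (simp add: blk_def)
  also have "\<dots> = (j + 1) * k" by simp
  also have "\<dots> \<le> (n div k) * k" using j by (intro mult_right_mono) auto
  also have "\<dots> \<le> n" by (metis div_mult_mod_eq le_add1)
  finally show "x < n" .
qed

lemma blk_disj: "x \<in> blk k j \<Longrightarrow> x \<in> blk k j' \<Longrightarrow> j = j'"
proof -
  assume a: "x \<in> blk k j" and b: "x \<in> blk k j'"
  have "x div k = j" using a by (rule blk_div)
  moreover have "x div k = j'" using b by (rule blk_div)
  ultimately show "j = j'" by simp
qed

lemma Fb_elim:
  assumes "e \<in> Fb k n"
  obtains j x y where "j < n div k" "x \<in> blk k j" "y \<in> blk k j" "x \<noteq> y" "e = {x,y}"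
  using assms unfolding Fb_def by blast

lemma Fb_sub_K: "Fb k n \<subseteq> complete_edges n"
proof
  fix e assume "e \<in> Fb k n"
  then obtain j x y where j: "j < n div k" "x \<in> blk k j" "y \<in> blk k j" "x \<noteq> y" "e = {x,y}"
    by (rule Fb_elim)
  have "x < n" using blk_lt[OF j(1) j(2)] .
  moreover have "y < n" using blk_lt[OF j(1) j(3)] .
  ultimately show "e \<in> complete_edges n" unfolding complete_edges_def using j(4,5) by blast
qed

lemma finite_Fb: "finite (Fb k n)"
  using Fb_sub_K finite_K finite_subset by blast

lemma card_Fb: "card (Fb k n) \<le> n * k"
proof -
  have "Fb k n \<subseteq> (\<Union>j<n div k. (\<lambda>p. {fst p, snd p}) ` (blk k j \<times> blk k j))"
  proof
    fix e assume "e \<in> Fb k n"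
    then obtain j x y where j: "j < n div k" "x \<in> blk k j" "y \<in> blk k j" "x \<noteq> y" "e = {x,y}"
      by (rule Fb_elim)
    have "(x,y) \<in> blk k j \<times> blk k j" using j by simp
    moreover have "e = (\<lambda>p. {fst p, snd p}) (x,y)" using j by simp
    ultimately show "e \<in> (\<Union>j<n div k. (\<lambda>p. {fst p, snd p}) ` (blk k j \<times> blk k j))"
      using j(1) by blast
  qed
  then have "card (Fb k n) \<le> card (\<Union>j<n div k. (\<lambda>p. {fst p, snd p}) ` (blk k j \<times> blk k j))"
    by (intro card_mono) (auto simp: blk_def)
  also have "\<dots> \<le> (\<Sum>j<n div k. card ((\<lambda>p. {fst p, snd p}) ` (blk k j \<times> blk k j)))"
    by (rule card_UN_le) simp
  also have "\<dots> \<le> (\<Sum>j<n div k. k * k)"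
  proof (rule sum_mono)
    fix j
    have "card ((\<lambda>p. {fst p, snd p}) ` (blk k j \<times> blk k j)) \<le> card (blk k j \<times> blk k j)"
      by (rule card_image_le) (simp add: blk_def)
    also have "\<dots> = k * k" by (simp add: blk_def card_cartesian_product)
    finally show "card ((\<lambda>p. {fst p, snd p}) ` (blk k j \<times> blk k j)) \<le> k * k" .
  qed
  also have "\<dots> = (n div k) * k * k" by simp
  also have "\<dots> \<le> n * k"
  proof -
    have "n div k * k \<le> n" by (metis div_mult_mod_eq le_add1)
    then show ?thesis by (simp add: mult_right_mono)
  qed
  finally show ?thesis .
qed

lemma CB_mono: "H \<subseteq> H' \<Longrightarrow> CB k n H \<subseteq> CB k n H'"
  unfolding CB_def cmpl_def by blast

lemma finite_CB: "finite (CB k n H)"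
  by (rule finite_subset[of _ "{..<n div k}"]) (auto simp: CB_def)

lemma good_mono: "good k \<epsilon> n H \<Longrightarrow> H \<subseteq> H' \<Longrightarrow> good k \<epsilon> n H'"
proof -
  assume g: "good k \<epsilon> n H" and s: "H \<subseteq> H'"
  have "card (CB k n H) \<le> card (CB k n H')" using CB_mono[OF s] finite_CB by (rule card_mono[rotated])
  then show ?thesis using g unfolding good_def by linarith
qed

lemma strat_in:
  assumes "n \<ge> 2" "spanning_tree n T"
  shows "strat k n H T \<in> T"
proof -
  obtain e where "e \<in> T" using has_edge[OF assms, of 0] assms(1) by auto
  then have ex: "\<exists>e. e \<in> T" by blast
  show ?thesis
  proof (cases "\<exists>e\<in>T. e \<in> Fb k n - H")
    case True
    have ex2: "\<exists>e. e \<in> T \<and> e \<in> Fb k n - H" using True by blast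
    show ?thesis using someI_ex[OF ex2] unfolding strat_def if_P[OF True] by simp
  next
    case False
    show ?thesis using someI_ex[OF ex] unfolding strat_def if_not_P[OF False] by simp
  qed
qed

lemma strat_Fb:
  assumes "\<exists>e\<in>T. e \<in> Fb k n - H"
  shows "strat k n H T \<in> Fb k n - H"
proof -
  have ex: "\<exists>e. e \<in> T \<and> e \<in> Fb k n - H" using assms by blast
  have "strat k n H T = (SOME e. e \<in> T \<and> e \<in> Fb k n - H)" unfolding strat_def if_P[OF assms] ..
  then show ?thesis using someI_ex[OF ex] by simp
qed

lemma good_copies:
  assumes fin: "finite VG" and kdef: "k = card VG"
    and EG: "EG \<subseteq> {{u, v} | u v. u \<in> VG \<and> v \<in> VG \<and> u \<noteq> v}"
  shows "has_disjoint_copies VG EG n H (card (CB k n H))"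
proof -
  define C where "C = CB k n H"
  define m where "m = card C"
  obtain g where g: "bij_betw g {0..<m} C" unfolding m_def C_def using ex_bij_betw_nat_finite[OF finite_CB] by blast
  obtain h where h: "bij_betw h VG {0..<k}" unfolding kdef using ex_bij_betw_finite_nat[OF fin] by blast
  define f where "f i v = g i * k + h v" for i v
  have gi: "g i < n div k \<and> cmpl k H (g i)" if "i < m" for i
  proof -
    have "g i \<in> C" using g that by (auto simp: bij_betw_def)
    then show ?thesis unfolding C_def CB_def by simp
  qed
  have hv: "h v < k" if "v \<in> VG" for v using h that by (auto simp: bij_betw_def)
  have inblk: "f i v \<in> blk k (g i)" if "v \<in> VG" for i v
    using hv[OF that] unfolding f_def blk_def by simp
  have injh: "inj_on h VG" using h by (simp add: bij_betw_def)
  have injg: "inj_on g {0..<m}" using g by (simp add: bij_betw_def)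
  have P1: "inj_on (f i) VG" for i
  proof (rule inj_onI)
    fix u v assume "u \<in> VG" "v \<in> VG" "f i u = f i v"
    then have "h u = h v" unfolding f_def by simp
    then show "u = v" using injh \<open>u \<in> VG\<close> \<open>v \<in> VG\<close> by (meson inj_onD)
  qed
  have P2: "f i ` VG \<subseteq> {..<n}" if "i < m" for i
    using blk_lt[OF conjunct1[OF gi[OF that]]] inblk by blast
  have P3: "f i ` e \<in> H" if ilt: "i < m" and eE: "e \<in> EG" for i e
  proof -
    obtain u v where uv: "e = {u,v}" "u \<in> VG" "v \<in> VG" "u \<noteq> v" using EG eE by blast
    have "f i u \<noteq> f i v" using P1[of i] uv by (meson inj_onD)
    moreover have "f i u \<in> blk k (g i)" "f i v \<in> blk k (g i)" using inblk uv by auto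
    ultimately have "{f i u, f i v} \<in> H" using conjunct2[OF gi[OF ilt]] unfolding cmpl_def by blast
    then show ?thesis using uv by simp
  qed
  have P4: "f i ` VG \<inter> f j ` VG = {}" if "i < m" "j < m" "i \<noteq> j" for i j
  proof (rule ccontr)
    assume "f i ` VG \<inter> f j ` VG \<noteq> {}"
    then obtain u v where uv: "u \<in> VG" "v \<in> VG" "f i u = f j v" by blast
    have a: "f i u \<in> blk k (g i)" using inblk uv(1) by blast
    have b: "f j v \<in> blk k (g j)" using inblk uv(2) by blast
    have b': "f i u \<in> blk k (g j)" using b uv(3) by metis
    have "g i = g j" using a b' by (rule blk_disj)
    then have "i = j" using injg that by (auto dest: inj_onD)
    then show False using that by simp
  qed
  show ?thesis unfolding has_disjoint_copies_def C_def[symmetric] m_def[symmetric]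
    using P1 P2 P3 P4 by blast
qed

lemma bad_matching:
  assumes k: "k > 0" and bad: "\<not> good k \<epsilon> n H" and s: "real s \<le> \<epsilon> * real n / real k - 1"
  shows "\<exists>M. M \<subseteq> Fb k n - H \<and> card M = s \<and> (\<forall>e\<in>M. \<forall>f\<in>M. e \<noteq> f \<longrightarrow> e \<inter> f = {})"
proof -
  define IB where "IB = {j. j < n div k \<and> \<not> cmpl k H j}"
  have un: "IB \<union> CB k n H = {..<n div k}" unfolding IB_def CB_def by auto
  have dj: "IB \<inter> CB k n H = {}" unfolding IB_def CB_def by auto
  have fIB: "finite IB" unfolding IB_def by simp
  have part: "card IB + card (CB k n H) = n div k"
    using card_Un_disjoint[OF fIB finite_CB dj] un by simp
  have nd: "real (n div k) \<ge> real n / real k - 1"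
  proof -
    have "n < (n div k + 1) * k" using k by (metis add.commute div_mult_mod_eq mod_less_divisor
          nat_add_left_cancel_less distrib_right mult_1)
    then have "real n < (real (n div k) + 1) * real k" by (metis of_nat_1 of_nat_add of_nat_less_iff of_nat_mult)
    then show ?thesis using k by (simp add: field_simps)
  qed
  have cb: "real (card (CB k n H)) < (1 - \<epsilon>) * real n / real k" using bad unfolding good_def by simp
  have eq: "(real n / real k - 1) - (1 - \<epsilon>) * real n / real k = \<epsilon> * real n / real k - 1"
    using k by (simp add: field_simps)
  have "real (card IB) = real (n div k) - real (card (CB k n H))" using part by (simp add: algebra_simps flip: of_nat_add)
  then have "real (card IB) > \<epsilon> * real n / real k - 1" using nd cb eq by linarith
  then have sIB: "s \<le> card IB" using s by simp
  obtain IB' where IB': "IB' \<subseteq> IB" "card IB' = s" "finite IB'"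
    using obtain_subset_with_card_n[OF sIB] by blast
  define me where "me j = (SOME e. e \<in> Fb k n - H \<and> e \<subseteq> blk k j \<and> e \<noteq> {})" for j
  have me: "me j \<in> Fb k n - H \<and> me j \<subseteq> blk k j \<and> me j \<noteq> {}" if "j \<in> IB" for j
  proof -
    have j: "j < n div k" "\<not> cmpl k H j" using that unfolding IB_def by auto
    then obtain x y where xy: "x \<in> blk k j" "y \<in> blk k j" "x \<noteq> y" "{x,y} \<notin> H"
      unfolding cmpl_def by blast
    have "{x,y} \<in> Fb k n" unfolding Fb_def using j(1) xy(1-3) by blast
    then have "\<exists>e. e \<in> Fb k n - H \<and> e \<subseteq> blk k j \<and> e \<noteq> {}" using xy by blast
    then show ?thesis unfolding me_def by (rule someI_ex)
  qed
  have inj: "inj_on me IB'"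
  proof (rule inj_onI)
    fix i j assume ij: "i \<in> IB'" "j \<in> IB'" "me i = me j"
    then have mi: "me i \<subseteq> blk k i \<and> me i \<noteq> {}" and mj: "me j \<subseteq> blk k j" using me IB'(1) by blast+
    then obtain z where "z \<in> me i" by blast
    then have "z \<in> blk k i" "z \<in> blk k j" using mi mj ij(3) by auto
    then show "i = j" by (rule blk_disj)
  qed
  define M where "M = me ` IB'"
  have "M \<subseteq> Fb k n - H" unfolding M_def using me IB'(1) by blast
  moreover have "card M = s" unfolding M_def using card_image[OF inj] IB'(2) by simp
  moreover have "\<forall>e\<in>M. \<forall>f\<in>M. e \<noteq> f \<longrightarrow> e \<inter> f = {}"
  proof (intro ballI impI)
    fix e f assume "e \<in> M" "f \<in> M" "e \<noteq> f"
    then obtain i j where ij: "i \<in> IB'" "j \<in> IB'" "e = me i" "f = me j" unfolding M_def by blast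
    then have "i \<noteq> j" using \<open>e \<noteq> f\<close> by blast
    have ei: "e \<subseteq> blk k i" and fj: "f \<subseteq> blk k j" using me ij IB'(1) by blast+
    show "e \<inter> f = {}"
    proof (rule ccontr)
      assume "e \<inter> f \<noteq> {}"
      then obtain z where "z \<in> e" "z \<in> f" by blast
      then have "z \<in> blk k i" "z \<in> blk k j" using ei fj by auto
      then have "i = j" by (rule blk_disj)
      then show False using \<open>i \<noteq> j\<close> by simp
    qed
  qed
  ultimately show ?thesis by blast
qed

definition Wf :: "nat \<Rightarrow> real \<Rightarrow> nat \<Rightarrow> nat set set \<Rightarrow> ennreal" where
  "Wf k \<epsilon> n H = (if good k \<epsilon> n H then 0 else ennreal ((1/2) ^ card (H \<inter> Fb k n)))"

lemma Wf_le1: "Wf k \<epsilon> n H \<le> 1"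
  unfolding Wf_def by (auto simp: power_le_one)

lemma step_bound:
  assumes n2: "n \<ge> 2"
    and hp: "\<not> good k \<epsilon> n H \<Longrightarrow>
       measure_pmf.prob (pmf_of_set (spanning_trees n)) {T. \<exists>e\<in>T. e \<in> Fb k n - H} \<ge> p"
    and p: "0 \<le> p" "p \<le> 1"
  shows "(\<integral>\<^sup>+T. Wf k \<epsilon> n (insert (strat k n H T) H) \<partial>pmf_of_set (spanning_trees n))
         \<le> ennreal (1 - p/2) * Wf k \<epsilon> n H"
proof (cases "good k \<epsilon> n H")
  case True
  then have "\<And>T. Wf k \<epsilon> n (insert (strat k n H T) H) = 0"
    unfolding Wf_def using good_mono[OF True] by auto
  then show ?thesis by simp
next
  case False
  define ST where "ST = spanning_trees n"
  define N where "N = card ST"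
  define c :: real where "c = (1/2) ^ card (H \<inter> Fb k n)"
  define A where "A = {T. \<exists>e\<in>T. e \<in> Fb k n - H}"
  define g where "g T = (if T \<in> A then c / 2 else c)" for T
  have fST: "finite ST" and neST: "ST \<noteq> {}" unfolding ST_def by (rule finite_ST, rule ST_ne)
  have Npos: "N > 0" unfolding N_def using fST neST by (simp add: card_gt_0_iff)
  have c0: "c \<ge> 0" unfolding c_def by simp
  have WH: "Wf k \<epsilon> n H = ennreal c" unfolding Wf_def c_def using False by simp
  have pw: "Wf k \<epsilon> n (insert (strat k n H T) H) \<le> ennreal (g T)" for T
  proof (cases "good k \<epsilon> n (insert (strat k n H T) H)")
    case True then show ?thesis unfolding Wf_def by simp
  next
    case bad': False
    show ?thesis
    proof (cases "T \<in> A")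
      case True
      then have ex: "\<exists>e\<in>T. e \<in> Fb k n - H" unfolding A_def by simp
      define e where "e = strat k n H T"
      have e: "e \<in> Fb k n - H" unfolding e_def by (rule strat_Fb[OF ex])
      have "insert e H \<inter> Fb k n = insert e (H \<inter> Fb k n)" using e by auto
      moreover have "e \<notin> H \<inter> Fb k n" using e by auto
      moreover have "finite (H \<inter> Fb k n)" using finite_Fb by simp
      ultimately have "card (insert e H \<inter> Fb k n) = Suc (card (H \<inter> Fb k n))" by simp
      then have "Wf k \<epsilon> n (insert e H) = ennreal (c / 2)"
        unfolding Wf_def c_def using bad' e_def by simp
      then show ?thesis unfolding g_def using True e_def by simp
    next
      case False
      have "card (H \<inter> Fb k n) \<le> card (insert (strat k n H T) H \<inter> Fb k n)"
        using finite_Fb by (intro card_mono) auto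
      then have "((1::real)/2) ^ card (insert (strat k n H T) H \<inter> Fb k n) \<le> c"
        unfolding c_def by (intro power_decreasing) auto
      then show ?thesis unfolding Wf_def g_def using bad' False by (simp add: ennreal_leI)
    qed
  qed
  have g0: "\<And>T. g T \<ge> 0" unfolding g_def using c0 by simp
  have "(\<integral>\<^sup>+T. Wf k \<epsilon> n (insert (strat k n H T) H) \<partial>pmf_of_set ST) \<le> (\<integral>\<^sup>+T. ennreal (g T) \<partial>pmf_of_set ST)"
    by (intro nn_integral_mono pw)
  also have "\<dots> = (\<Sum>T\<in>ST. ennreal (g T)) / of_nat N"
    unfolding N_def by (rule nn_integral_pmf_of_set[OF neST fST])
  also have "\<dots> = ennreal (sum g ST / real N)"
    using g0 Npos by (simp add: ennreal_of_nat_eq_real_of_nat divide_ennreal sum_nonneg)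
  also have "sum g ST / real N = c * (1 - (real (card (ST \<inter> A)) / real N) / 2)"
  proof -
    have "sum g ST = (\<Sum>T\<in>ST \<inter> {T. T \<in> A}. c / 2) + (\<Sum>T\<in>ST \<inter> - {T. T \<in> A}. c)"
      unfolding g_def by (rule sum.If_cases[OF fST])
    also have "\<dots> = c / 2 * real (card (ST \<inter> A)) + c * real (card (ST - A))"
      by (simp add: Diff_eq Int_def)
    also have "card (ST - A) = N - card (ST \<inter> A)"
      unfolding N_def using fST by (metis card_Diff_subset_Int Int_commute finite_Int)
    finally have "sum g ST = c / 2 * real (card (ST \<inter> A)) + c * real (N - card (ST \<inter> A))" .
    moreover have "card (ST \<inter> A) \<le> N" unfolding N_def using fST by (simp add: card_mono)
    ultimately have "sum g ST = c * real N - c / 2 * real (card (ST \<inter> A))"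
      by (simp add: of_nat_diff algebra_simps)
    then show ?thesis using Npos by (simp add: field_simps)
  qed
  also have "real (card (ST \<inter> A)) / real N = measure_pmf.prob (pmf_of_set ST) A"
    unfolding N_def by (rule measure_pmf_of_set[OF neST fST, symmetric])
  also have "ennreal (c * (1 - measure_pmf.prob (pmf_of_set ST) A / 2)) \<le> ennreal (c * (1 - p / 2))"
    using hp[OF False] c0 unfolding ST_def A_def by (intro ennreal_leI mult_left_mono) auto
  also have "\<dots> = ennreal (1 - p/2) * Wf k \<epsilon> n H"
    unfolding WH using c0 p by (simp add: ennreal_mult[symmetric] mult.commute)
  finally show ?thesis unfolding ST_def .
qed

lemma exp_bound:
  assumes step: "\<And>H. (\<integral>\<^sup>+T. W (insert (S H T) H) \<partial>pmf_of_set (spanning_trees n)) \<le> ennreal r * W H"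
    and r: "r \<ge> 0"
  shows "(\<integral>\<^sup>+H. W H \<partial>ustsr_graph n S t) \<le> ennreal (r ^ t) * W {}"
proof (induction t)
  case 0
  then show ?case by simp
next
  case (Suc t)
  have "(\<integral>\<^sup>+H. W H \<partial>ustsr_graph n S (Suc t))
        = (\<integral>\<^sup>+H. (\<integral>\<^sup>+T. W (insert (S H T) H) \<partial>pmf_of_set (spanning_trees n)) \<partial>ustsr_graph n S t)"
    by simp
  also have "\<dots> \<le> (\<integral>\<^sup>+H. ennreal r * W H \<partial>ustsr_graph n S t)"
    by (intro nn_integral_mono step)
  also have "\<dots> = ennreal r * (\<integral>\<^sup>+H. W H \<partial>ustsr_graph n S t)"
    by (rule nn_integral_cmult) simp
  also have "\<dots> \<le> ennreal r * (ennreal (r ^ t) * W {})"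
    by (intro mult_left_mono Suc) simp
  also have "\<dots> = ennreal (r ^ Suc t) * W {}"
    using r by (simp add: ennreal_mult mult_ac)
  finally show ?case .
qed

lemma main_n:
  assumes k0: "k > 0" and d0: "\<delta> > 0" and d1: "\<delta> \<le> 1/32" and d2: "\<delta> \<le> \<epsilon> / (4 * real k)"
    and n8: "n \<ge> 8" and nd: "\<delta> * real n \<ge> 1" and ne: "\<epsilon> * real n / real k \<ge> 4"
    and bad: "\<not> good k \<epsilon> n H"
  shows "measure_pmf.prob (pmf_of_set (spanning_trees n)) {T. \<exists>e\<in>T. e \<in> Fb k n - H} \<ge> \<delta> / 2"
proof -
  define s where "s = nat \<lceil>\<delta> * real n\<rceil>"
  have s1: "real s \<ge> \<delta> * real n" unfolding s_def by linarith
  have s2: "real s \<le> \<delta> * real n + 1"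
  proof -
    have "\<delta> * real n \<ge> 0" using nd by linarith
    then have "\<lceil>\<delta> * real n\<rceil> \<ge> 0" by simp
    then have "real s = real_of_int \<lceil>\<delta> * real n\<rceil>" unfolding s_def by simp
    then show ?thesis using of_int_ceiling_le_add_one[of "\<delta> * real n"] by simp
  qed
  have kpos: "real k > 0" using k0 by simp
  define Y where "Y = \<epsilon> * real n / real k"
  have "\<delta> * real n \<le> \<epsilon> / (4 * real k) * real n" using d2 by (intro mult_right_mono) auto
  also have "\<dots> = Y / 4" unfolding Y_def using kpos by (simp add: field_simps)
  finally have "\<delta> * real n \<le> Y / 4" .
  then have "real s \<le> Y - 1" using s2 ne unfolding Y_def[symmetric] by linarith
  then have s3: "real s \<le> \<epsilon> * real n / real k - 1" unfolding Y_def .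
  obtain M where M: "M \<subseteq> Fb k n - H" "card M = s" "\<forall>e\<in>M. \<forall>f\<in>M. e \<noteq> f \<longrightarrow> e \<inter> f = {}"
    using bad_matching[OF k0 bad s3] by blast
  have MK: "M \<subseteq> complete_edges n" using M(1) Fb_sub_K by blast
  have hp: "measure_pmf.prob (pmf_of_set (spanning_trees n)) {T. T \<inter> M \<noteq> {}}
         \<ge> real s / real n - 4 * (real s)\<^sup>2 / (real n)\<^sup>2"
    using hit_prob[OF n8 MK M(3)] M(2) by simp
  have sub: "{T. T \<inter> M \<noteq> {}} \<subseteq> {T. \<exists>e\<in>T. e \<in> Fb k n - H}" using M(1) by blast
  have mono: "measure_pmf.prob (pmf_of_set (spanning_trees n)) {T. T \<inter> M \<noteq> {}}
        \<le> measure_pmf.prob (pmf_of_set (spanning_trees n)) {T. \<exists>e\<in>T. e \<in> Fb k n - H}"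
    using sub by (rule measure_pmf.finite_measure_mono) simp
  define x where "x = real s / real n"
  have npos: "real n > 0" using n8 by simp
  have x1: "x \<ge> \<delta>" unfolding x_def using s1 npos by (simp add: field_simps)
  have x2: "x \<le> 2 * \<delta>" unfolding x_def using s2 nd npos by (simp add: field_simps)
  have eqx: "real s / real n - 4 * (real s)\<^sup>2 / (real n)\<^sup>2 = x * (1 - 4 * x)"
    unfolding x_def using npos by (simp add: power2_eq_square field_simps)
  have "1 - 4 * x \<ge> 3/4" using x2 d1 by linarith
  then have "x * (1 - 4 * x) \<ge> x * (3/4)" using x1 d0 by (intro mult_left_mono) auto
  moreover have "x * (3/4) \<ge> \<delta> / 2" using x1 d0 by linarith
  ultimately show ?thesis using hp mono eqx by linarith
qed

lemma main_prob:
  assumes n2: "n \<ge> 2"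
    and hp: "\<And>H. \<not> good k \<epsilon> n H \<Longrightarrow>
       measure_pmf.prob (pmf_of_set (spanning_trees n)) {T. \<exists>e\<in>T. e \<in> Fb k n - H} \<ge> p"
    and p: "0 \<le> p" "p \<le> 1"
  shows "measure_pmf.prob (ustsr_graph n (strat k n) t) {H. good k \<epsilon> n H}
         \<ge> 1 - 2 ^ card (Fb k n) * (1 - p/2) ^ t"
proof -
  define D where "D = ustsr_graph n (strat k n) t"
  define L where "L = card (Fb k n)"
  define r where "r = 1 - p/2"
  have r0: "r \<ge> 0" unfolding r_def using p by simp
  have st: "\<And>H. (\<integral>\<^sup>+T. Wf k \<epsilon> n (insert (strat k n H T) H) \<partial>pmf_of_set (spanning_trees n))
         \<le> ennreal r * Wf k \<epsilon> n H"
    unfolding r_def by (rule step_bound[OF n2 hp p])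
  have E: "(\<integral>\<^sup>+H. Wf k \<epsilon> n H \<partial>D) \<le> ennreal (r ^ t) * Wf k \<epsilon> n {}"
    unfolding D_def by (rule exp_bound[OF st r0])
  have pw: "indicator {H. \<not> good k \<epsilon> n H} H \<le> ennreal (2 ^ L) * Wf k \<epsilon> n H" for H
  proof (cases "good k \<epsilon> n H")
    case False
    have "card (H \<inter> Fb k n) \<le> L" unfolding L_def using finite_Fb by (intro card_mono) auto
    then have "(2::real) ^ L * (1/2) ^ card (H \<inter> Fb k n) \<ge> 2 ^ card (H \<inter> Fb k n) * (1/2) ^ card (H \<inter> Fb k n)"
      by (intro mult_right_mono power_increasing) auto
    also have "(2::real) ^ card (H \<inter> Fb k n) * (1/2) ^ card (H \<inter> Fb k n) = 1"
      by (simp add: power_mult_distrib[symmetric])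
    finally have "1 \<le> ennreal ((2::real) ^ L * (1/2) ^ card (H \<inter> Fb k n))" by (simp add: ennreal_leI)
    then show ?thesis using False unfolding Wf_def by (simp add: ennreal_mult)
  qed simp
  have "emeasure (measure_pmf D) {H. \<not> good k \<epsilon> n H} = (\<integral>\<^sup>+H. indicator {H. \<not> good k \<epsilon> n H} H \<partial>D)"
    by (simp add: nn_integral_indicator)
  also have "\<dots> \<le> (\<integral>\<^sup>+H. ennreal (2 ^ L) * Wf k \<epsilon> n H \<partial>D)" by (intro nn_integral_mono pw)
  also have "\<dots> = ennreal (2 ^ L) * (\<integral>\<^sup>+H. Wf k \<epsilon> n H \<partial>D)" by (rule nn_integral_cmult) simp
  also have "\<dots> \<le> ennreal (2 ^ L) * (ennreal (r ^ t) * 1)"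
  proof (rule mult_left_mono)
    have "ennreal (r ^ t) * Wf k \<epsilon> n {} \<le> ennreal (r ^ t) * 1"
      by (rule mult_left_mono[OF Wf_le1]) simp
    then show "(\<integral>\<^sup>+H. Wf k \<epsilon> n H \<partial>D) \<le> ennreal (r ^ t) * 1" using E by (rule order_trans[rotated])
  qed simp
  also have "\<dots> = ennreal (2 ^ L * r ^ t)" using r0 by (simp add: ennreal_mult)
  finally have "measure_pmf.prob D {H. \<not> good k \<epsilon> n H} \<le> 2 ^ L * r ^ t"
    using r0 by (simp add: measure_pmf.emeasure_eq_measure ennreal_le_iff)
  moreover have "measure_pmf.prob D {H. good k \<epsilon> n H} = 1 - measure_pmf.prob D {H. \<not> good k \<epsilon> n H}"
  proof -
    have "{H. good k \<epsilon> n H} = space (measure_pmf D) - {H. \<not> good k \<epsilon> n H}" by auto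
    then show ?thesis using measure_pmf.prob_compl[of "{H. \<not> good k \<epsilon> n H}" D] by simp
  qed
  ultimately show ?thesis unfolding D_def L_def r_def by simp
qed

theorem lemma3p6:
  fixes VG :: "'a set" and EG :: "'a set set" and \<epsilon> :: real
  assumes "finite VG" and "VG \<noteq> {}"
    and "EG \<subseteq> {{u, v} | u v. u \<in> VG \<and> v \<in> VG \<and> u \<noteq> v}"
    and "\<epsilon> > 0"
  shows "\<exists>C :: real. C > 0 \<and>
    (\<exists>S :: nat \<Rightarrow> nat set set \<Rightarrow> nat set set \<Rightarrow> nat set.
       (\<forall>n\<ge>2. \<forall>H T. spanning_tree n T \<longrightarrow> S n H T \<in> T) \<and>
       (\<lambda>n. measure_pmf.prob (ustsr_graph n (S n) (nat \<lfloor>C * real n\<rfloor>))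
              {H. \<exists>m. real m \<ge> (1 - \<epsilon>) * real n / real (card VG) \<and>
                      has_disjoint_copies VG EG n H m})
         \<longlonglongrightarrow> 1)"
proof -
  define k where "k = card VG"
  have k0: "k > 0" using assms(1,2) unfolding k_def by (simp add: card_gt_0_iff)
  define \<delta> where "\<delta> = min (\<epsilon> / (4 * real k)) (1/32)"
  have d0: "\<delta> > 0" using assms(4) k0 by (simp add: \<delta>_def)
  have d1: "\<delta> \<le> 1/32" and d2: "\<delta> \<le> \<epsilon> / (4 * real k)" unfolding \<delta>_def by auto
  define p where "p = \<delta> / 2"
  define r where "r = 1 - p / 2"
  have p01: "0 \<le> p" "p \<le> 1" using d0 d1 by (auto simp: p_def)
  have r01: "0 < r" "r < 1" using d0 d1 by (auto simp: r_def p_def)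
  obtain c :: nat where c: "r ^ c < (1/2) ^ (k+1)"
    using real_arch_pow_inv[of "(1/2)^(k+1)" r] r01 by auto
  have c0: "c > 0"
  proof (rule ccontr)
    assume "\<not> c > 0"
    then have "c = 0" by simp
    then have "(1::real) < (1/2) ^ (k+1)" using c by simp
    moreover have "((1::real)/2) ^ (k+1) \<le> 1" by (rule power_le_one) auto
    ultimately show False by simp
  qed
  define S where "S n = strat k n" for n
  define Tg where "Tg n = {H. \<exists>m. real m \<ge> (1 - \<epsilon>) * real n / real (card VG) \<and>
                      has_disjoint_copies VG EG n H m}" for n
  define n0 where "n0 = nat \<lceil>8 + 1 / \<delta> + 4 * real k / \<epsilon>\<rceil>"
  have lower: "measure_pmf.prob (ustsr_graph n (S n) (nat \<lfloor>real c * real n\<rfloor>)) (Tg n) \<ge> 1 - (1/2) ^ n"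
    if nn0: "n \<ge> n0" for n
  proof -
    have nr: "real n \<ge> 8 + 1 / \<delta> + 4 * real k / \<epsilon>" using nn0 unfolding n0_def by linarith
    have t1: "1 / \<delta> \<ge> 0" using d0 by simp
    have t2: "4 * real k / \<epsilon> \<ge> 0" using assms(4) by simp
    have "real n \<ge> 8" using nr t1 t2 by linarith
    then have n8: "n \<ge> 8" by simp
    have nd: "\<delta> * real n \<ge> 1"
    proof -
      have "real n \<ge> 1 / \<delta>" using nr t1 t2 by linarith
      then have "\<delta> * real n \<ge> \<delta> * (1 / \<delta>)" using d0 by (intro mult_left_mono) auto
      then show ?thesis using d0 by simp
    qed
    have ne: "\<epsilon> * real n / real k \<ge> 4"
    proof -
      have "real n \<ge> 4 * real k / \<epsilon>" using nr t1 t2 by linarith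
      then have "\<epsilon> * real n \<ge> \<epsilon> * (4 * real k / \<epsilon>)" using assms(4) by (intro mult_left_mono) auto
      then have "\<epsilon> * real n \<ge> 4 * real k" using assms(4) by simp
      then show ?thesis using k0 by (simp add: field_simps)
    qed
    have n2: "n \<ge> 2" using n8 by simp
    have hp: "\<And>H. \<not> good k \<epsilon> n H \<Longrightarrow>
       measure_pmf.prob (pmf_of_set (spanning_trees n)) {T. \<exists>e\<in>T. e \<in> Fb k n - H} \<ge> p"
      unfolding p_def using main_n[OF k0 d0 d1 d2 n8 nd ne] by blast
    have rounds: "nat \<lfloor>real c * real n\<rfloor> = c * n"
      by (metis floor_of_nat nat_int of_nat_mult)
    have mp: "measure_pmf.prob (ustsr_graph n (strat k n) (c * n)) {H. good k \<epsilon> n H}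
         \<ge> 1 - 2 ^ card (Fb k n) * r ^ (c * n)"
      unfolding r_def using main_prob[OF n2 hp p01] .
    have sub: "{H. good k \<epsilon> n H} \<subseteq> Tg n"
    proof
      fix H assume "H \<in> {H. good k \<epsilon> n H}"
      then have g: "good k \<epsilon> n H" by simp
      have "has_disjoint_copies VG EG n H (card (CB k n H))"
        by (rule good_copies[OF assms(1) k_def assms(3)])
      moreover have "real (card (CB k n H)) \<ge> (1 - \<epsilon>) * real n / real (card VG)"
        using g unfolding good_def k_def .
      ultimately show "H \<in> Tg n" unfolding Tg_def by blast
    qed
    have mono: "measure_pmf.prob (ustsr_graph n (strat k n) (c * n)) {H. good k \<epsilon> n H}
        \<le> measure_pmf.prob (ustsr_graph n (strat k n) (c * n)) (Tg n)"
      using sub by (rule measure_pmf.finite_measure_mono) simp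
    have bnd: "2 ^ card (Fb k n) * r ^ (c * n) \<le> ((1::real)/2) ^ n"
    proof -
      have "(2::real) ^ card (Fb k n) \<le> 2 ^ (n * k)" by (rule power_increasing[OF card_Fb]) simp
      moreover have "r ^ (c * n) \<le> ((1/2) ^ (k+1)) ^ n"
        unfolding power_mult using c r01 by (intro power_mono) auto
      ultimately have "2 ^ card (Fb k n) * r ^ (c * n) \<le> (2::real) ^ (n * k) * ((1/2) ^ (k+1)) ^ n"
        using r01 by (intro mult_mono) auto
      also have "(2::real) ^ (n * k) = (2 ^ k) ^ n"
        by (metis mult.commute power_mult)
      also have "(2 ^ k) ^ n * ((1/2) ^ (k+1)) ^ n = ((2::real) ^ k * (1/2) ^ (k+1)) ^ n"
        by (rule power_mult_distrib[symmetric])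
      also have "(2::real) ^ k * (1/2) ^ (k+1) = 1/2"
        by (simp add: power_mult_distrib[symmetric])
      finally show ?thesis .
    qed
    show ?thesis using mp mono bnd unfolding S_def rounds by linarith
  qed
  have lim: "(\<lambda>n. measure_pmf.prob (ustsr_graph n (S n) (nat \<lfloor>real c * real n\<rfloor>)) (Tg n)) \<longlonglongrightarrow> 1"
  proof (rule tendsto_sandwich[of "\<lambda>n. 1 - (1/2) ^ n" _ _ "\<lambda>n. 1"])
    show "\<forall>\<^sub>F n in sequentially. 1 - (1/2) ^ n \<le> measure_pmf.prob (ustsr_graph n (S n) (nat \<lfloor>real c * real n\<rfloor>)) (Tg n)"
      using lower by (rule eventually_sequentiallyI)
    show "\<forall>\<^sub>F n in sequentially. measure_pmf.prob (ustsr_graph n (S n) (nat \<lfloor>real c * real n\<rfloor>)) (Tg n) \<le> 1"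
      by (simp add: measure_pmf.prob_le_1)
    show "(\<lambda>n. 1 - (1/2::real) ^ n) \<longlonglongrightarrow> 1"
    proof -
      have "(\<lambda>n. (1/2::real) ^ n) \<longlonglongrightarrow> 0" by (rule LIMSEQ_power_zero) simp
      from tendsto_diff[OF tendsto_const this, of 1] show ?thesis by simp
    qed
    show "(\<lambda>n. 1::real) \<longlonglongrightarrow> 1" by simp
  qed
  show ?thesis
  proof (intro exI[of _ "real c"] conjI exI[of _ S])
    show "real c > 0" using c0 by simp
    show "\<forall>n\<ge>2. \<forall>H T. spanning_tree n T \<longrightarrow> S n H T \<in> T"
      unfolding S_def by (intro allI impI strat_in)
    show "(\<lambda>n. measure_pmf.prob (ustsr_graph n (S n) (nat \<lfloor>real c * real n\<rfloor>))
              {H. \<exists>m. real m \<ge> (1 - \<epsilon>) * real n / real (card VG) \<and>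
                      has_disjoint_copies VG EG n H m}) \<longlonglongrightarrow> 1"
      using lim unfolding Tg_def .
  qed
qed

end
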